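(* A connected component $B^\ell$ of nonabsorbing action profiles is rectangular if and only if there is no joint exit at any mixed action profile in $X^\ell$, i.e., ${\cal E}_J(x)=\emptyset$ for all $x\in X^\ell$.
   Context: $I$ is a finite set of players, $A_i$ finite nonempty action sets, $A=\prod_iA_i$, $p:A\to[0,1]$. $B=\{a\in A:p(a)=0\}$; the connected components $B^1,\dots,B^L$ of nonabsorbing action profiles are the connected components of the graph on $B$ in which $a,a'$ are adjacent iff $a_{-i}=a'_{-i}$ for some $i\in I$. $B^\ell$ is rectangular if $B^\ell=\prod_{i\in I}B^\ell_i$ for some $B^\ell_i\subseteq A_i$. Let $\Xi=\prod_i\Delta(A_i)$, $p(x)=\sum_ap(a)\prod_jx_j(a_j)$ (multilinear extension), and $X^\ell:=\{x\in\Xi:\prod_i{\rm supp}(x_i)\subseteq B^\ell\}$. For $x\in X^\ell$, a pair $(J,a_J)$ with $\emptyset\ne J\subseteq I$, $a_J\in\prod_{i\in J}A_i$ is an exit at $x$ if $p(a_J,x_{-J})>0$ and $p(a_{J'},x_{-J'})=0$ for every proper subset $J'\subsetneq J$; it is a joint exit if $|J|\ge2$. ${\cal E}_J(x)$ is the set of joint exits at $x$. *)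

theory Defs
  imports Complex_Main "HOL-Library.FuncSet"
begin

text \<open>Players: a finite set I (of type 'i); action sets A i (actions of type 'a);
pure action profiles are the extensional functions in PiE I A;
mixed strategies x i are functions 'a => real forming a probability on A i.\<close>

definition nonabsorbing :: "'i set \<Rightarrow> ('i \<Rightarrow> 'a set) \<Rightarrow> (('i \<Rightarrow> 'a) \<Rightarrow> real) \<Rightarrow> ('i \<Rightarrow> 'a) set" where
  "nonabsorbing I A p = {a \<in> PiE I A. p a = 0}"

definition unilateral_adj :: "'i set \<Rightarrow> ('i \<Rightarrow> 'a) \<Rightarrow> ('i \<Rightarrow> 'a) \<Rightarrow> bool" where
  "unilateral_adj I a a' \<longleftrightarrow> (\<exists>i\<in>I. \<forall>j\<in>I - {i}. a j = a' j)"

definition adj_graph :: "'i set \<Rightarrow> ('i \<Rightarrow> 'a set) \<Rightarrow> (('i \<Rightarrow> 'a) \<Rightarrow> real) \<Rightarrow> (('i \<Rightarrow> 'a) \<times> ('i \<Rightarrow> 'a)) set" where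
  "adj_graph I A p = {(a, a'). a \<in> nonabsorbing I A p \<and> a' \<in> nonabsorbing I A p \<and> unilateral_adj I a a'}"

definition is_component :: "'i set \<Rightarrow> ('i \<Rightarrow> 'a set) \<Rightarrow> (('i \<Rightarrow> 'a) \<Rightarrow> real) \<Rightarrow> ('i \<Rightarrow> 'a) set \<Rightarrow> bool" where
  "is_component I A p C \<longleftrightarrow>
     (\<exists>b \<in> nonabsorbing I A p. C = {b' \<in> nonabsorbing I A p. (b, b') \<in> (adj_graph I A p)\<^sup>*})"

definition rectangular :: "'i set \<Rightarrow> ('i \<Rightarrow> 'a set) \<Rightarrow> ('i \<Rightarrow> 'a) set \<Rightarrow> bool" where
  "rectangular I A C \<longleftrightarrow> (\<exists>Bs. (\<forall>i\<in>I. Bs i \<subseteq> A i) \<and> C = PiE I Bs)"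

definition mixed_profiles :: "'i set \<Rightarrow> ('i \<Rightarrow> 'a set) \<Rightarrow> ('i \<Rightarrow> 'a \<Rightarrow> real) set" where
  "mixed_profiles I A = {x. \<forall>i\<in>I. (\<forall>b. x i b \<ge> 0) \<and> (\<forall>b. b \<notin> A i \<longrightarrow> x i b = 0)
                                 \<and> (\<Sum>b\<in>A i. x i b) = 1}"

definition supp :: "('a \<Rightarrow> real) \<Rightarrow> 'a set" where
  "supp y = {b. y b \<noteq> 0}"

definition pext :: "'i set \<Rightarrow> ('i \<Rightarrow> 'a set) \<Rightarrow> (('i \<Rightarrow> 'a) \<Rightarrow> real) \<Rightarrow> ('i \<Rightarrow> 'a \<Rightarrow> real) \<Rightarrow> real" where
  "pext I A p x = (\<Sum>a\<in>PiE I A. p a * (\<Prod>j\<in>I. x j (a j)))"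

definition Xcomp :: "'i set \<Rightarrow> ('i \<Rightarrow> 'a set) \<Rightarrow> ('i \<Rightarrow> 'a) set \<Rightarrow> ('i \<Rightarrow> 'a \<Rightarrow> real) set" where
  "Xcomp I A C = {x \<in> mixed_profiles I A. PiE I (\<lambda>i. supp (x i)) \<subseteq> C}"

definition replace_pure :: "('i \<Rightarrow> 'a \<Rightarrow> real) \<Rightarrow> 'i set \<Rightarrow> ('i \<Rightarrow> 'a) \<Rightarrow> ('i \<Rightarrow> 'a \<Rightarrow> real)" where
  "replace_pure x J aJ = (\<lambda>i. if i \<in> J then (\<lambda>b. if b = aJ i then 1 else 0) else x i)"

definition is_exit :: "'i set \<Rightarrow> ('i \<Rightarrow> 'a set) \<Rightarrow> (('i \<Rightarrow> 'a) \<Rightarrow> real) \<Rightarrow> ('i \<Rightarrow> 'a \<Rightarrow> real)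
                        \<Rightarrow> 'i set \<Rightarrow> ('i \<Rightarrow> 'a) \<Rightarrow> bool" where
  "is_exit I A p x J aJ \<longleftrightarrow>
     J \<noteq> {} \<and> J \<subseteq> I \<and> aJ \<in> PiE J A \<and>
     pext I A p (replace_pure x J aJ) > 0 \<and>
     (\<forall>J'. J' \<subset> J \<longrightarrow> pext I A p (replace_pure x J' aJ) = 0)"

definition joint_exits :: "'i set \<Rightarrow> ('i \<Rightarrow> 'a set) \<Rightarrow> (('i \<Rightarrow> 'a) \<Rightarrow> real) \<Rightarrow> ('i \<Rightarrow> 'a \<Rightarrow> real)
                        \<Rightarrow> ('i set \<times> ('i \<Rightarrow> 'a)) set" where
  "joint_exits I A p x = {(J, aJ). is_exit I A p x J aJ \<and> card J \<ge> 2}"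

end

theory Submission
  imports Defs
begin

lemma ext_eq:
  assumes "x \<in> PiE I S" "y \<in> PiE I S'" "\<And>i. i \<in> I \<Longrightarrow> x i = y i"
  shows "x = y"
proof
  fix i show "x i = y i" using assms by (cases "i \<in> I") (auto simp: PiE_def extensional_def)
qed

lemma upd_PiE: "c \<in> PiE I A \<Longrightarrow> i \<in> I \<Longrightarrow> u \<in> A i \<Longrightarrow> c(i := u) \<in> PiE I A"
  by (auto simp: PiE_def extensional_def)

lemma pext_pure:
  assumes fin: "finite (PiE I A)" and finI: "finite I" and e: "e \<in> PiE I A"
  shows "pext I A p (\<lambda>i b. if b = e i then 1 else 0) = p e"
proof -
  have "\<And>a. a \<in> PiE I A \<Longrightarrow> p a * (\<Prod>j\<in>I. (if a j = e j then 1 else 0)) = (if a = e then p a else 0)"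
  proof -
    fix a assume a: "a \<in> PiE I A"
    show "p a * (\<Prod>j\<in>I. (if a j = e j then 1 else 0)) = (if a = e then p a else 0)"
    proof (cases "a = e")
      case True then show ?thesis by simp
    next
      case False
      then obtain j where "j \<in> I" "a j \<noteq> e j" using ext_eq[OF a e] by blast
      then have "(\<Prod>j\<in>I. (if a j = e j then 1 else 0)) = (0::real)"
        using finI by (auto simp: prod_zero_iff)
      then show ?thesis using False by simp
    qed
  qed
  then have "pext I A p (\<lambda>i b. if b = e i then 1 else 0) = (\<Sum>a\<in>PiE I A. if a = e then p a else 0)"
    unfolding pext_def by (intro sum.cong) auto
  also have "\<dots> = p e" using fin e by (simp add: sum.delta')
  finally show ?thesis .
qed

lemma adj_sym: "(x, y) \<in> (adj_graph I A p)\<^sup>* \<Longrightarrow> (y, x) \<in> (adj_graph I A p)\<^sup>*"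
proof (induction rule: rtrancl_induct)
  case base then show ?case by simp
next
  case (step y z)
  have "(z, y) \<in> adj_graph I A p" using step(2)
    by (auto simp: adj_graph_def unilateral_adj_def) metis
  then show ?case using step(3) by (rule converse_rtrancl_into_rtrancl)
qed

theorem mainTheorem6:
  fixes I :: "'i set" and A :: "'i \<Rightarrow> 'a set" and p :: "('i \<Rightarrow> 'a) \<Rightarrow> real"
    and C :: "('i \<Rightarrow> 'a) set"
  assumes "finite I"
    and "\<And>i. i \<in> I \<Longrightarrow> finite (A i) \<and> A i \<noteq> {}"
    and "\<And>a. a \<in> PiE I A \<Longrightarrow> 0 \<le> p a \<and> p a \<le> 1"
    and "is_component I A p C"
  shows "rectangular I A C \<longleftrightarrow> (\<forall>x \<in> Xcomp I A C. joint_exits I A p x = {})"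
proof -
  from assms(4) obtain b where bB: "b \<in> nonabsorbing I A p"
    and Cdef: "C = {b' \<in> nonabsorbing I A p. (b, b') \<in> (adj_graph I A p)\<^sup>*}"
    unfolding is_component_def by blast
  have CB: "C \<subseteq> nonabsorbing I A p" using Cdef by auto
  have CA: "C \<subseteq> PiE I A" using CB by (auto simp: nonabsorbing_def)
  have Cp: "\<And>c. c \<in> C \<Longrightarrow> p c = 0" using CB by (auto simp: nonabsorbing_def)
  have bC: "b \<in> C" using Cdef bB by auto
  have step: "\<And>c e. c \<in> C \<Longrightarrow> e \<in> PiE I A \<Longrightarrow> p e = 0 \<Longrightarrow> unilateral_adj I c e \<Longrightarrow> e \<in> C"
  proof -
    fix c e assume c: "c \<in> C" and e: "e \<in> PiE I A" "p e = 0" "unilateral_adj I c e"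
    have "(c, e) \<in> adj_graph I A p" using c CB e by (auto simp: adj_graph_def nonabsorbing_def)
    moreover have "(b, c) \<in> (adj_graph I A p)\<^sup>*" using c Cdef by auto
    ultimately have "(b, e) \<in> (adj_graph I A p)\<^sup>*" by (rule rtrancl_into_rtrancl[rotated])
    then show "e \<in> C" using Cdef e by (auto simp: nonabsorbing_def)
  qed
  have finA: "finite (PiE I A)" using assms(1,2) by (intro finite_PiE) auto
  have pure: "\<And>e. e \<in> PiE I A \<Longrightarrow> pext I A p (\<lambda>i b. if b = e i then 1 else 0) = p e"
    using pext_pure[OF finA assms(1)] by blast
  show ?thesis
  proof
    assume "rectangular I A C"
    then obtain Bs where BsA: "\<forall>i\<in>I. Bs i \<subseteq> A i" and CBs: "C = PiE I Bs"
      unfolding rectangular_def by blast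
    show "\<forall>x\<in>Xcomp I A C. joint_exits I A p x = {}"
    proof (intro ballI equals0I)
      fix x Jp assume xX: "x \<in> Xcomp I A C" and "Jp \<in> joint_exits I A p x"
      then obtain J aJ where ex: "is_exit I A p x J aJ" and cJ: "card J \<ge> 2"
        by (auto simp: joint_exits_def)
      from ex have JI: "J \<subseteq> I" and aJA: "aJ \<in> PiE J A"
        and pos: "pext I A p (replace_pure x J aJ) > 0"
        and zero: "\<And>J'. J' \<subset> J \<Longrightarrow> pext I A p (replace_pure x J' aJ) = 0"
        unfolding is_exit_def by blast+
      from xX have xm: "\<And>i. i \<in> I \<Longrightarrow> (\<forall>b. x i b \<ge> 0) \<and> (\<forall>b. b \<notin> A i \<longrightarrow> x i b = 0) \<and> sum (x i) (A i) = 1"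
        and xsupp: "PiE I (\<lambda>i. supp (x i)) \<subseteq> C"
        by (auto simp: Xcomp_def mixed_profiles_def)
      have Sne: "supp (x i) \<noteq> {}" if "i \<in> I" for i
      proof
        assume "supp (x i) = {}"
        then have "\<And>b. x i b = 0" by (auto simp: supp_def)
        then show False using xm[OF that] by simp
      qed
      have SA: "supp (x i) \<subseteq> A i" if "i \<in> I" for i
        using xm[OF that] by (auto simp: supp_def)
      obtain s where s: "s \<in> PiE I (\<lambda>i. supp (x i))"
        using Sne by (metis PiE_eq_empty_iff ex_in_conv)
      have sA: "s \<in> PiE I A" using s SA by (auto simp: PiE_def Pi_def)
      have sC: "s \<in> C" using s xsupp by blast
      have SBs: "supp (x i) \<subseteq> Bs i" if i: "i \<in> I" for i
      proof
        fix u assume u: "u \<in> supp (x i)"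
        have "s(i := u) \<in> PiE I (\<lambda>i. supp (x i))" using upd_PiE[OF s i u] .
        then have "s(i := u) \<in> PiE I Bs" using xsupp CBs by blast
        then show "u \<in> Bs i" using i by (auto simp: PiE_def Pi_def)
      qed
      have aJBs: "aJ i \<in> Bs i" if i: "i \<in> J" for i
      proof -
        have "{i} \<subset> J"
        proof -
          have "J \<noteq> {i}" using cJ by auto
          then show ?thesis using i by auto
        qed
        then have z: "pext I A p (replace_pure x {i} aJ) = 0" by (rule zero)
        have iI: "i \<in> I" using i JI by auto
        define e where "e = s(i := aJ i)"
        have eA: "e \<in> PiE I A" unfolding e_def using upd_PiE[OF sA iI] aJA i by auto
        have rnn: "0 \<le> replace_pure x {i} aJ j v" if "j \<in> I" for j v
          using xm[OF that] by (auto simp: replace_pure_def)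
        have "\<forall>a\<in>PiE I A. p a * (\<Prod>j\<in>I. replace_pure x {i} aJ j (a j)) = 0"
          using z unfolding pext_def
          by (subst (asm) sum_nonneg_eq_0_iff[OF finA])
             (auto intro!: mult_nonneg_nonneg prod_nonneg rnn assms(3)[THEN conjunct1])
        then have "p e * (\<Prod>j\<in>I. replace_pure x {i} aJ j (e j)) = 0" using eA by blast
        moreover have "(\<Prod>j\<in>I. replace_pure x {i} aJ j (e j)) > 0"
        proof (rule prod_pos)
          fix j assume j: "j \<in> I"
          show "replace_pure x {i} aJ j (e j) > 0"
          proof (cases "j = i")
            case True then show ?thesis by (simp add: replace_pure_def e_def)
          next
            case False
            have "s j \<in> supp (x j)" using s j by auto
            then have "x j (s j) \<noteq> 0" by (simp add: supp_def)
            moreover have "x j (s j) \<ge> 0" using xm[OF j] by auto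
            ultimately show ?thesis using False by (simp add: replace_pure_def e_def)
          qed
        qed
        ultimately have pe: "p e = 0" by simp
        have "unilateral_adj I s e" using iI by (auto simp: unilateral_adj_def e_def)
        then have "e \<in> C" using step[OF sC eA pe] by simp
        then have "e \<in> PiE I Bs" using CBs by simp
        then show ?thesis using iI by (auto simp: e_def PiE_def Pi_def)
      qed
      have "pext I A p (replace_pure x J aJ) \<noteq> 0" using pos by simp
      then obtain a where a: "a \<in> PiE I A" and an: "p a * (\<Prod>j\<in>I. replace_pure x J aJ j (a j)) \<noteq> 0"
        unfolding pext_def by (meson sum.neutral)
      from an have pa: "p a \<noteq> 0" by auto
      from an have fac: "\<And>j. j \<in> I \<Longrightarrow> replace_pure x J aJ j (a j) \<noteq> 0"
        using assms(1) by (auto simp: prod_zero_iff)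
      have "a \<in> PiE I Bs"
      proof -
        have "a j \<in> Bs j" if j: "j \<in> I" for j
        proof (cases "j \<in> J")
          case True
          then have "a j = aJ j" using fac[OF j] by (auto simp: replace_pure_def split: if_splits)
          then show ?thesis using aJBs True by simp
        next
          case False
          then have "a j \<in> supp (x j)" using fac[OF j] by (auto simp: replace_pure_def supp_def)
          then show ?thesis using SBs j by blast
        qed
        then show ?thesis using a by (auto simp: PiE_def Pi_def)
      qed
      then have "a \<in> C" using CBs by simp
      then show False using Cp pa by blast
    qed
  next
    assume noex: "\<forall>x\<in>Xcomp I A C. joint_exits I A p x = {}"
    have SC: "c(i := u, j := v) \<in> C"
      if c: "c \<in> C" and i: "i \<in> I" and j: "j \<in> I" and ij: "i \<noteq> j"
        and ci: "c(i := u) \<in> C" and cj: "c(j := v) \<in> C" for c i j u v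
    proof -
      define e where "e = c(i := u, j := v)"
      have uA: "u \<in> A i" using CA ci i by (force simp: PiE_def Pi_def)
      have vA: "v \<in> A j" using CA cj j by (force simp: PiE_def Pi_def)
      have cA: "c \<in> PiE I A" using c CA by blast
      have eA: "e \<in> PiE I A" unfolding e_def using upd_PiE[OF upd_PiE[OF cA i uA] j vA] .
      show ?thesis
      proof (cases "p e = 0")
        case True
        have "unilateral_adj I (c(i := u)) e" using j ij by (auto simp: unilateral_adj_def e_def)
        then show ?thesis using step[OF ci eA True] e_def by simp
      next
        case False
        define x where "x = (\<lambda>k b. if b = c k then 1 else (0::real))"
        have xX: "x \<in> Xcomp I A C"
        proof -
          have "x \<in> mixed_profiles I A"
            unfolding mixed_profiles_def
          proof (intro CollectI ballI conjI allI impI)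
            fix k b assume k: "k \<in> I"
            show "0 \<le> x k b" by (simp add: x_def)
            have ck: "c k \<in> A k" using cA k by auto
            show "b \<notin> A k \<Longrightarrow> x k b = 0" using ck by (auto simp: x_def)
            show "sum (x k) (A k) = 1" using ck assms(2)[OF k] unfolding x_def
              by (simp add: sum.delta')
          qed
          moreover have "PiE I (\<lambda>k. supp (x k)) \<subseteq> C"
          proof
            fix f assume f: "f \<in> PiE I (\<lambda>k. supp (x k))"
            have "f = c"
            proof (rule ext_eq[OF f cA])
              fix k assume "k \<in> I"
              then have "f k \<in> supp (x k)" using f by auto
              then show "f k = c k" by (auto simp: x_def supp_def split: if_splits)
            qed
            then show "f \<in> C" using c by simp
          qed
          ultimately show ?thesis by (simp add: Xcomp_def)
        qed
        define J where "J = {i, j}"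
        define aJ where "aJ = restrict e J"
        have rp: "replace_pure x J' aJ = (\<lambda>k b. if b = (\<lambda>k. if k \<in> J' then e k else c k) k then 1 else 0)"
          if "J' \<subseteq> J" for J'
          using that by (auto simp: replace_pure_def x_def aJ_def fun_eq_iff)
        have "replace_pure x J aJ = (\<lambda>k b. if b = e k then 1 else 0)"
          by (auto simp: replace_pure_def x_def aJ_def fun_eq_iff J_def e_def)
        then have pJ: "pext I A p (replace_pure x J aJ) = p e" using pure[OF eA] by simp
        have pJpos: "pext I A p (replace_pure x J aJ) > 0"
          using pJ False assms(3)[OF eA] by simp
        have pJ': "pext I A p (replace_pure x J' aJ) = 0" if J': "J' \<subset> J" for J'
        proof -
          have "J' = {} \<or> J' = {i} \<or> J' = {j}" using J' unfolding J_def by blast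
          moreover have "replace_pure x {} aJ = (\<lambda>k b. if b = c k then 1 else 0)"
            by (auto simp: replace_pure_def x_def)
          moreover have "replace_pure x {i} aJ = (\<lambda>k b. if b = (c(i := u)) k then 1 else 0)"
            using ij by (auto simp: replace_pure_def x_def aJ_def fun_eq_iff J_def e_def)
          moreover have "replace_pure x {j} aJ = (\<lambda>k b. if b = (c(j := v)) k then 1 else 0)"
            using ij by (auto simp: replace_pure_def x_def aJ_def fun_eq_iff J_def e_def)
          moreover have "pext I A p (\<lambda>k b. if b = c k then 1 else 0) = 0" using pure cA Cp c by simp
          moreover have "pext I A p (\<lambda>k b. if b = (c(i := u)) k then 1 else 0) = 0"
            using pure[of "c(i := u)"] CA Cp[OF ci] ci by auto
          moreover have "pext I A p (\<lambda>k b. if b = (c(j := v)) k then 1 else 0) = 0"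
            using pure[of "c(j := v)"] CA Cp[OF cj] cj by auto
          ultimately show ?thesis by metis
        qed
        have "is_exit I A p x J aJ"
          unfolding is_exit_def using pJpos pJ' i j eA
          by (auto simp: J_def aJ_def PiE_def Pi_def)
        moreover have "card J \<ge> 2" using ij by (simp add: J_def)
        ultimately have "(J, aJ) \<in> joint_exits I A p x" by (simp add: joint_exits_def)
        then show ?thesis using noex xX by blast
      qed
    qed
    define Bs where "Bs i = (\<lambda>c. c i) ` C" for i
    have path: "e(i := d i) \<in> C" if "(e, d) \<in> (adj_graph I A p)\<^sup>*" "e \<in> C" "d \<in> C" "i \<in> I" for e d i
      using that
    proof (induction rule: converse_rtrancl_induct)
      case base then show ?case by simp
    next
      case (step e e')
      have e'C: "e' \<in> C" using Cdef step.prems(1) step.hyps(1)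
        by (auto simp: adj_graph_def intro: rtrancl_into_rtrancl)
      have IH: "e'(i := d i) \<in> C" using step.IH e'C step.prems by blast
      obtain k where k: "k \<in> I" and ke: "\<forall>j\<in>I - {k}. e j = e' j"
        using step.hyps(1) by (auto simp: adj_graph_def unilateral_adj_def)
      have eA: "e \<in> PiE I A" and e'A: "e' \<in> PiE I A" using step.prems(1) e'C CA by auto
      have eq: "e = e'(k := e k)"
        by (rule ext_eq[OF eA upd_PiE[OF e'A k]]) (use ke eA k in \<open>auto simp: PiE_def Pi_def\<close>)
      show ?case
      proof (cases "k = i")
        case True
        have "e(i := d i) = e'(i := d i)" using eq True by (metis fun_upd_upd)
        then show ?thesis using IH by metis
      next
        case False
        have "e'(i := d i, k := e k) \<in> C"
          using SC[OF e'C step.prems(3) k] False IH eq step.prems(1) by metis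
        moreover have "e'(i := d i, k := e k) = e(i := d i)" using eq False
          by (metis fun_upd_twist fun_upd_upd)
        ultimately show ?thesis by metis
      qed
    qed
    have upd: "c(i := w) \<in> C" if c: "c \<in> C" and i: "i \<in> I" and w: "w \<in> Bs i" for c i w
    proof -
      obtain d where d: "d \<in> C" and wd: "w = d i" using w by (auto simp: Bs_def)
      have "(c, b) \<in> (adj_graph I A p)\<^sup>*" using c Cdef adj_sym by blast
      moreover have "(b, d) \<in> (adj_graph I A p)\<^sup>*" using d Cdef by blast
      ultimately have "(c, d) \<in> (adj_graph I A p)\<^sup>*" by simp
      then show ?thesis using path c d i wd by blast
    qed
    have BsA: "\<forall>i\<in>I. Bs i \<subseteq> A i" using CA by (auto simp: Bs_def PiE_def Pi_def)
    have "C = PiE I Bs"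
    proof
      show "C \<subseteq> PiE I Bs" using CA by (auto simp: Bs_def PiE_def Pi_def extensional_def)
      show "PiE I Bs \<subseteq> C"
      proof
        fix f assume f: "f \<in> PiE I Bs"
        have "finite F \<Longrightarrow> F \<subseteq> I \<Longrightarrow> (\<lambda>k. if k \<in> F then f k else b k) \<in> C" for F
        proof (induction F rule: finite_induct)
          case empty then show ?case using bC by simp
          next
          case (insert i F)
          have g: "(\<lambda>k. if k \<in> F then f k else b k) \<in> C" using insert by simp
          have "(\<lambda>k. if k \<in> F then f k else b k)(i := f i) \<in> C"
            using upd[OF g] insert.prems f by auto
          moreover have "(\<lambda>k. if k \<in> F then f k else b k)(i := f i) = (\<lambda>k. if k \<in> insert i F then f k else b k)"
            by (auto simp: fun_eq_iff)
          ultimately show ?case by simp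
        qed
        then have "(\<lambda>k. if k \<in> I then f k else b k) \<in> C" using assms(1) by simp
        moreover have "(\<lambda>k. if k \<in> I then f k else b k) = f"
          using f bC CA by (auto simp: fun_eq_iff PiE_def extensional_def)
        ultimately show "f \<in> C" by simp
      qed
    qed
    then show "rectangular I A C" using BsA unfolding rectangular_def by blast
  qed
qed

end
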